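(* For all terms $t,t'$ and every environment $\gamma$: if $t\,\llbracket\forall X.X\to X\rrbracket_\gamma\,t'$, then $t\,\llbracket\forall X.X\to X\rrbracket_\gamma\,I$, where $I=\lambda x.x$.
   Context: Terms are those of the pure untyped $\lambda$-calculus, up to $\alpha$-equivalence; $=_{\beta\eta}$ is $\beta\eta$-convertibility. A relation on terms is $\beta\eta$-closed if closed under replacing either related term by a $\beta\eta$-equal one; $\mathcal{R}$ is the set of such relations; environments $\gamma$ map finitely many type variables to $\mathcal{R}$. Interpretation of types: $\llbracket X\rrbracket_\gamma=\gamma(X)$; $t\,\llbracket R\to R'\rrbracket_\gamma\,t'$ iff for all $a,a'$ with $a\,\llbracket R\rrbracket_\gamma\,a'$, $t\,a\,\llbracket R'\rrbracket_\gamma\,t'\,a'$; $\llbracket \forall X.R\rrbracket_\gamma=\bigcap_{r\in\mathcal{R}}\llbracket R\rrbracket_{\gamma[X\mapsto r]}$. *)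

theory Defs
  imports Main
begin

datatype dB = Var nat | App dB dB | Abs dB

primrec lift :: "dB \<Rightarrow> nat \<Rightarrow> dB" where
  "lift (Var i) k = (if i < k then Var i else Var (Suc i))"
| "lift (App s t) k = App (lift s k) (lift t k)"
| "lift (Abs s) k = Abs (lift s (Suc k))"

primrec subst :: "dB \<Rightarrow> dB \<Rightarrow> nat \<Rightarrow> dB" where
  "subst (Var i) s k = (if k < i then Var (i - 1) else if i = k then s else Var i)"
| "subst (App t u) s k = App (subst t s k) (subst u s k)"
| "subst (Abs t) s k = Abs (subst t (lift s 0) (Suc k))"

inductive beta_eta :: "dB \<Rightarrow> dB \<Rightarrow> bool" where
  beta: "beta_eta (App (Abs s) t) (subst s t 0)"
| eta: "beta_eta (Abs (App (lift t 0) (Var 0))) t"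
| appL: "beta_eta s t \<Longrightarrow> beta_eta (App s u) (App t u)"
| appR: "beta_eta s t \<Longrightarrow> beta_eta (App u s) (App u t)"
| abs: "beta_eta s t \<Longrightarrow> beta_eta (Abs s) (Abs t)"

definition conv :: "dB \<Rightarrow> dB \<Rightarrow> bool" where
  "conv = equivclp beta_eta"

type_synonym rel = "dB \<Rightarrow> dB \<Rightarrow> bool"

definition be_closed :: "rel \<Rightarrow> bool" where
  "be_closed r \<longleftrightarrow> (\<forall>t t' u u'. r t t' \<and> conv t u \<and> conv t' u' \<longrightarrow> r u u')"

datatype ty = TVar nat | Arr ty ty | All nat ty

type_synonym env = "nat \<rightharpoonup> rel"

definition is_env :: "env \<Rightarrow> bool" where
  "is_env \<gamma> \<longleftrightarrow> finite (dom \<gamma>) \<and> (\<forall>r \<in> ran \<gamma>. be_closed r)"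

text \<open>Unbound type variables are interpreted as the empty relation (irrelevant for closed types).\<close>
primrec interp :: "env \<Rightarrow> ty \<Rightarrow> rel" where
  "interp \<gamma> (TVar X) = (case \<gamma> X of Some r \<Rightarrow> r | None \<Rightarrow> (\<lambda>_ _. False))"
| "interp \<gamma> (Arr A B) = (\<lambda>t t'. \<forall>a a'. interp \<gamma> A a a' \<longrightarrow> interp \<gamma> B (App t a) (App t' a'))"
| "interp \<gamma> (All X A) = (\<lambda>t t'. \<forall>r. be_closed r \<longrightarrow> interp (\<gamma>(X \<mapsto> r)) A t t')"

definition Id_tm :: dB where
  "Id_tm = Abs (Var 0)"

end

theory Submission
  imports Defs
begin

lemma conv_refl: "conv a a" unfolding conv_def by simp
lemma conv_sym: "conv a b \<Longrightarrow> conv b a" unfolding conv_def by (rule equivclp_sym)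
lemma conv_trans: "conv a b \<Longrightarrow> conv b c \<Longrightarrow> conv a c" unfolding conv_def by (rule equivclp_trans)

lemma conv_id: "conv a (App Id_tm a)"
proof -
  have "beta_eta (App (Abs (Var 0)) a) (subst (Var 0) a 0)" by (rule beta_eta.beta)
  hence "beta_eta (App Id_tm a) a" by (simp add: Id_tm_def)
  hence "conv (App Id_tm a) a" unfolding conv_def by (rule r_into_equivclp)
  thus ?thesis by (rule conv_sym)
qed

theorem mainTheorem14:
  fixes t t' :: dB and \<gamma> :: env and X :: nat
  assumes "is_env \<gamma>"
    and "interp \<gamma> (All X (Arr (TVar X) (TVar X))) t t'"
  shows "interp \<gamma> (All X (Arr (TVar X) (TVar X))) t Id_tm"
proof -
  have H: "\<And>r a a'. be_closed r \<Longrightarrow> r a a' \<Longrightarrow> r (App t a) (App t' a')"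
    using assms(2) by (simp, blast)
  have "r (App t a) (App Id_tm a')" if rc: "be_closed r" and ra: "r a a'" for r a a'
  proof -
    define s where "s = (\<lambda>u u'. conv u' a' \<and> r u a')"
    have sc: "be_closed s"
      unfolding be_closed_def s_def
    proof (intro allI impI)
      fix u u' v v' assume h: "(conv u' a' \<and> r u a') \<and> conv u v \<and> conv u' v'"
      have "conv v' a'" using h conv_sym conv_trans by blast
      moreover have "r v a'" using h rc conv_refl unfolding be_closed_def by blast
      ultimately show "conv v' a' \<and> r v a'" by simp
    qed
    have "s a a'" unfolding s_def using ra conv_refl by simp
    from H[OF sc this] have "r (App t a) a'" unfolding s_def by simp
    thus ?thesis using rc conv_refl conv_id unfolding be_closed_def by blast
  qed
  thus ?thesis by (simp, blast)
qed

end
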